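(* Let $G$ be a group with finite generating set $S$ (with $S=S^{-1}$, $e\notin S$), and let $N\le G$ be a normal subgroup which is infinite cyclic. Then $\kappa(g)=0$ for all $g\in N\smallsetminus\{e\}$.
   Context: For a group $G$ with finite generating set $S$ ($S=S^{-1}$, $e\notin S$), $|x|$ denotes the word length of $x\in G$ with respect to $S$. For $g\in G$ define $\mathrm{Av}(g)=\frac{1}{|S|}\sum_{a\in S}|a^{-1}ga|$, and for $g\neq e$ define the curvature $\kappa(g)=\frac{|g|-\mathrm{Av}(g)}{|g|}$. *)

theory Defs
  imports Complex_Main "HOL-Algebra.Algebra"
begin

definition word_prod :: "('a, 'b) monoid_scheme \<Rightarrow> 'a list \<Rightarrow> 'a" where
  "word_prod G ws = foldr (\<lambda>a b. a \<otimes>\<^bsub>G\<^esub> b) ws \<one>\<^bsub>G\<^esub>"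

definition word_length :: "('a, 'b) monoid_scheme \<Rightarrow> 'a set \<Rightarrow> 'a \<Rightarrow> nat" where
  "word_length G S x = (LEAST n. \<exists>ws. length ws = n \<and> set ws \<subseteq> S \<and> word_prod G ws = x)"

definition fin_sym_gen_set :: "('a, 'b) monoid_scheme \<Rightarrow> 'a set \<Rightarrow> bool" where
  "fin_sym_gen_set G S \<longleftrightarrow> finite S \<and> S \<subseteq> carrier G \<and> generate G S = carrier G
     \<and> (\<forall>a\<in>S. inv\<^bsub>G\<^esub> a \<in> S) \<and> \<one>\<^bsub>G\<^esub> \<notin> S"

definition Av :: "('a, 'b) monoid_scheme \<Rightarrow> 'a set \<Rightarrow> 'a \<Rightarrow> real" where
  "Av G S g = (1 / real (card S)) * (\<Sum>a\<in>S. real (word_length G S (inv\<^bsub>G\<^esub> a \<otimes>\<^bsub>G\<^esub> g \<otimes>\<^bsub>G\<^esub> a)))"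

definition curvature :: "('a, 'b) monoid_scheme \<Rightarrow> 'a set \<Rightarrow> 'a \<Rightarrow> real" where
  "curvature G S g = (real (word_length G S g) - Av G S g) / real (word_length G S g)"

end

theory Submission
  imports Defs
begin

lemma (in group) conj_hom: "a \<in> carrier G \<Longrightarrow> (\<lambda>x. inv a \<otimes> x \<otimes> a) \<in> hom G G"
proof (rule homI)
  fix x y assume a: "a \<in> carrier G" and x: "x \<in> carrier G" and y: "y \<in> carrier G"
  have c: "\<And>z. z \<in> carrier G \<Longrightarrow> a \<otimes> (inv a \<otimes> z) = z" using a by (simp add: m_assoc[symmetric])
  have "inv a \<otimes> x \<otimes> a \<otimes> (inv a \<otimes> y \<otimes> a) = inv a \<otimes> x \<otimes> (a \<otimes> inv a) \<otimes> y \<otimes> a"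
    using a x y c by (simp add: m_assoc)
  also have "\<dots> = inv a \<otimes> (x \<otimes> y) \<otimes> a" using a x y by (simp add: m_assoc)
  finally show "inv a \<otimes> (x \<otimes> y) \<otimes> a = inv a \<otimes> x \<otimes> a \<otimes> (inv a \<otimes> y \<otimes> a)" by simp
qed auto

lemma (in group) conj_int_pow:
  assumes "a \<in> carrier G" "x \<in> carrier G"
  shows "inv a \<otimes> x [^] (k::int) \<otimes> a = (inv a \<otimes> x \<otimes> a) [^] k"
  using hom_int_pow[OF conj_hom[OF assms(1)] assms(2) is_group is_group] by simp

lemma (in group) cyc_conj:
  assumes h: "h \<in> carrier G" and nrm: "generate G {h} \<lhd> G"
    and inj: "\<forall>i j::int. h [^] i = h [^] j \<longrightarrow> i = j"
    and a: "a \<in> carrier G"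
  shows "inv a \<otimes> h \<otimes> a = h \<or> inv a \<otimes> h \<otimes> a = h [^] (-1::int)"
proof -
  have gp: "generate G {h} = { h [^] (k :: int) | k. k \<in> UNIV }" using generate_pow[OF h] .
  have hin: "h \<in> generate G {h}" using h by (simp add: generate.incl)
  from nrm have cl: "\<forall>x \<in> carrier G. \<forall>y \<in> generate G {h}. x \<otimes> y \<otimes> inv x \<in> generate G {h}"
    by (simp add: normal_inv_iff)
  from cl a hin have "inv a \<otimes> h \<otimes> inv (inv a) \<in> generate G {h}" by blast
  then have "inv a \<otimes> h \<otimes> a \<in> generate G {h}" using a by simp
  then obtain k where k: "inv a \<otimes> h \<otimes> a = h [^] (k::int)" using gp a by auto
  from cl a hin have "a \<otimes> h \<otimes> inv a \<in> generate G {h}" by auto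
  then obtain m where m: "a \<otimes> h \<otimes> inv a = h [^] (m::int)" using gp by auto
  have c1: "inv a \<otimes> (a \<otimes> z) = z" if "z \<in> carrier G" for z using a that by (simp add: m_assoc[symmetric])
  have "h = inv a \<otimes> (a \<otimes> h \<otimes> inv a) \<otimes> a" using a h by (simp add: m_assoc c1)
  also have "\<dots> = inv a \<otimes> h [^] m \<otimes> a" using m by simp
  also have "\<dots> = (h [^] k) [^] m" using conj_int_pow[OF a h] k by simp
  also have "\<dots> = h [^] (k * m)" using int_pow_pow[OF h] by simp
  finally have "h [^] (1::int) = h [^] (k*m)" using h by simp
  with inj have "k * m = 1" by metis
  then have "k = 1 \<or> k = -1" by (auto simp: zmult_eq_1_iff)
  then show ?thesis using k h by auto
qed

lemma (in group) cyc_conj_elem: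
  assumes h: "h \<in> carrier G" and nrm: "generate G {h} \<lhd> G"
    and inj: "\<forall>i j::int. h [^] i = h [^] j \<longrightarrow> i = j"
    and a: "a \<in> carrier G" and g: "g \<in> generate G {h}"
  shows "inv a \<otimes> g \<otimes> a = g \<or> inv a \<otimes> g \<otimes> a = inv g"
proof -
  obtain n where n: "g = h [^] (n::int)" using g generate_pow[OF h] by auto
  have e: "inv a \<otimes> g \<otimes> a = (inv a \<otimes> h \<otimes> a) [^] n" using conj_int_pow[OF a h] n by simp
  from cyc_conj[OF h nrm inj a] show ?thesis
  proof
    assume "inv a \<otimes> h \<otimes> a = h" then show ?thesis using e n by simp
  next
    assume "inv a \<otimes> h \<otimes> a = h [^] (-1::int)"
    then have "inv a \<otimes> g \<otimes> a = h [^] (- n)" using e int_pow_pow[OF h] by simp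
    then show ?thesis using n h int_pow_neg[OF h] by simp
  qed
qed

lemma word_prod_append:
  assumes "monoid G" "set xs \<subseteq> carrier G" "set ys \<subseteq> carrier G"
  shows "word_prod G (xs @ ys) = word_prod G xs \<otimes>\<^bsub>G\<^esub> word_prod G ys"
  using assms(2)
proof (induction xs)
  case Nil
  have "word_prod G ys \<in> carrier G" using assms(3)
  proof (induction ys)
    case Nil then show ?case using monoid.one_closed[OF assms(1)] by (simp add: word_prod_def)
  next
    case (Cons y ys) then show ?case using monoid.m_closed[OF assms(1)] by (simp add: word_prod_def)
  qed
  then show ?case using monoid.l_one[OF assms(1)] by (simp add: word_prod_def)
next
  case (Cons x xs)
  have c: "word_prod G zs \<in> carrier G" if "set zs \<subseteq> carrier G" for zs
    using that
  proof (induction zs)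
    case Nil then show ?case using monoid.one_closed[OF assms(1)] by (simp add: word_prod_def)
  next
    case (Cons y ys) then show ?case using monoid.m_closed[OF assms(1)] by (simp add: word_prod_def)
  qed
  have "word_prod G ((x # xs) @ ys) = x \<otimes>\<^bsub>G\<^esub> word_prod G (xs @ ys)" by (simp add: word_prod_def)
  also have "\<dots> = x \<otimes>\<^bsub>G\<^esub> (word_prod G xs \<otimes>\<^bsub>G\<^esub> word_prod G ys)" using Cons by simp
  also have "\<dots> = word_prod G (x # xs) \<otimes>\<^bsub>G\<^esub> word_prod G ys"
    using Cons.prems c[of xs] c[OF assms(3)] monoid.m_assoc[OF assms(1)] by (simp add: word_prod_def)
  finally show ?case .
qed

lemma word_prod_closed:
  assumes "monoid G" "set zs \<subseteq> carrier G" shows "word_prod G zs \<in> carrier G"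
  using assms(2)
proof (induction zs)
  case Nil then show ?case using monoid.one_closed[OF assms(1)] by (simp add: word_prod_def)
next
  case (Cons y ys) then show ?case using monoid.m_closed[OF assms(1)] by (simp add: word_prod_def)
qed

lemma word_prod_rev_inv:
  assumes "group G" "set ws \<subseteq> carrier G"
  shows "word_prod G (rev (map (m_inv G) ws)) = inv\<^bsub>G\<^esub> (word_prod G ws)"
  using assms(2)
proof (induction ws)
  case Nil then show ?case using monoid.inv_one[OF group.is_monoid[OF assms(1)]] by (simp add: word_prod_def)
next
  case (Cons x xs)
  have m: "monoid G" using assms(1) by (simp add: group_def)
  have s1: "set (rev (map (m_inv G) xs)) \<subseteq> carrier G" using Cons.prems group.inv_closed[OF assms(1)] by auto
  have s2: "set [inv\<^bsub>G\<^esub> x] \<subseteq> carrier G" using Cons.prems group.inv_closed[OF assms(1)] by auto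
  have "word_prod G (rev (map (m_inv G) (x # xs))) = word_prod G (rev (map (m_inv G) xs)) \<otimes>\<^bsub>G\<^esub> word_prod G [inv\<^bsub>G\<^esub> x]"
    using word_prod_append[OF m s1 s2] by simp
  also have "\<dots> = inv\<^bsub>G\<^esub> (word_prod G xs) \<otimes>\<^bsub>G\<^esub> inv\<^bsub>G\<^esub> x"
    using Cons group.inv_closed[OF assms(1)] monoid.r_one[OF m] by (simp add: word_prod_def)
  also have "\<dots> = inv\<^bsub>G\<^esub> (x \<otimes>\<^bsub>G\<^esub> word_prod G xs)"
    using group.inv_mult_group[OF assms(1)] Cons.prems word_prod_closed[OF m] by simp
  finally show ?case by (simp add: word_prod_def)
qed

lemma word_length_inv:
  assumes "group G" "fin_sym_gen_set G S" "g \<in> carrier G"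
  shows "word_length G S (inv\<^bsub>G\<^esub> g) = word_length G S g"
proof -
  have SC: "S \<subseteq> carrier G" and Si: "\<forall>a\<in>S. inv\<^bsub>G\<^esub> a \<in> S" using assms(2) by (auto simp: fin_sym_gen_set_def)
  have key: "\<exists>ws. length ws = n \<and> set ws \<subseteq> S \<and> word_prod G ws = inv\<^bsub>G\<^esub> x"
    if "\<exists>ws. length ws = n \<and> set ws \<subseteq> S \<and> word_prod G ws = x" for n x
  proof -
    from that obtain ws where w: "length ws = n" "set ws \<subseteq> S" "word_prod G ws = x" by blast
    show ?thesis
      apply (rule exI[of _ "rev (map (m_inv G) ws)"])
      using w Si SC word_prod_rev_inv[OF assms(1), of ws] by auto
  qed
  have "(\<exists>ws. length ws = n \<and> set ws \<subseteq> S \<and> word_prod G ws = inv\<^bsub>G\<^esub> g) \<longleftrightarrow>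
        (\<exists>ws. length ws = n \<and> set ws \<subseteq> S \<and> word_prod G ws = g)" for n
    using key[of n g] key[of n "inv\<^bsub>G\<^esub> g"] group.inv_inv[OF assms(1) assms(3)] by auto
  then show ?thesis unfolding word_length_def by simp
qed

theorem mainTheorem3:
  fixes G :: "('a, 'b) monoid_scheme" and S N :: "'a set"
  assumes "group G"
    and "fin_sym_gen_set G S"
    and "N \<lhd> G"
    and "\<exists>h\<in>carrier G. N = generate G {h}"
    and "infinite N"
  shows "\<forall>g\<in>N - {\<one>\<^bsub>G\<^esub>}. curvature G S g = 0"
proof
  fix g assume g: "g \<in> N - {\<one>\<^bsub>G\<^esub>}"
  interpret group G by fact
  obtain h where h: "h \<in> carrier G" and Nh: "N = generate G {h}" using assms(4) by blast
  have "carrier (subgroup_generated G {h}) = generate G {h}"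
    using h by (simp add: carrier_subgroup_generated Int_absorb1)
  then have inj: "\<forall>i j::int. h [^]\<^bsub>G\<^esub> i = h [^]\<^bsub>G\<^esub> j \<longrightarrow> i = j"
    using infinite_cyclic_subgroup_int[OF h] assms(5) Nh by simp
  have SC: "S \<subseteq> carrier G" and fS: "finite S" and gen: "generate G S = carrier G"
    using assms(2) by (auto simp: fin_sym_gen_set_def)
  have Sne: "S \<noteq> {}"
  proof
    assume "S = {}"
    then have "carrier G = {\<one>\<^bsub>G\<^esub>}" using gen generate_empty by simp
    moreover have "N \<subseteq> carrier G" using assms(3) by (simp add: normal_imp_subgroup subgroup.subset)
    ultimately show False using assms(5) finite_subset by auto
  qed
  have gC: "g \<in> carrier G" using g assms(3) by (auto dest: normal_imp_subgroup subgroup.subset)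
  have each: "word_length G S (inv\<^bsub>G\<^esub> a \<otimes>\<^bsub>G\<^esub> g \<otimes>\<^bsub>G\<^esub> a) = word_length G S g" if "a \<in> S" for a
  proof -
    have aC: "a \<in> carrier G" using that SC by auto
    from cyc_conj_elem[OF h assms(3)[unfolded Nh] inj aC] g Nh
    have "inv\<^bsub>G\<^esub> a \<otimes>\<^bsub>G\<^esub> g \<otimes>\<^bsub>G\<^esub> a = g \<or> inv\<^bsub>G\<^esub> a \<otimes>\<^bsub>G\<^esub> g \<otimes>\<^bsub>G\<^esub> a = inv\<^bsub>G\<^esub> g" by auto
    then show ?thesis using word_length_inv[OF assms(1) assms(2) gC] by auto
  qed
  have "Av G S g = (1 / real (card S)) * (real (card S) * real (word_length G S g))"
    unfolding Av_def using each by simp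
  also have "\<dots> = real (word_length G S g)" using Sne fS by simp
  finally show "curvature G S g = 0" unfolding curvature_def by simp
qed

end
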